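(* Let $p\le q$ be positive integers, $f=x^p+y^q\in\mathbb C[x,y]$ and $\ell\in\mathbb N$. Then for every $\omega=(\omega_1,\omega_2)\in\mathbb R^2\setminus\{0\}$, $$b_{\mathrm{Ann}(f^\ell),\omega}(s)=\begin{cases}s-p\ell\omega_1&\text{if }p\omega_1\le q\omega_2,\\ s-q\ell\omega_2&\text{otherwise.}\end{cases}$$
   Context: $D_2$ is the second Weyl algebra in $x,y,\partial_x,\partial_y$; ideals are left ideals. For $\omega\in\mathbb R^2$, the $(-\omega,\omega)$-weight of $x^{a}y^{b}\partial_x^{c}\partial_y^{e}$ is $-\omega_1a-\omega_2b+\omega_1c+\omega_2e$; $\mathrm{in}_{(-\omega,\omega)}(I)$ is the left ideal generated by the maximal-weight parts of the (normally ordered) elements of $I$. For a holonomic ideal $I$ and $\omega\neq0$, with $s=\omega_1x\partial_x+\omega_2y\partial_y$, the b-function $b_{I,\omega}(s)$ is the monic generator of $\mathrm{in}_{(-\omega,\omega)}(I)\cap\mathbb C[s]$ (standing assumption: $\mathrm{in}_{(-\omega,\omega)}(I)\neq D_2$). $\mathrm{Ann}(f^\ell)=\{P\in D_2:P\bullet f^\ell=0\}$ with $x\bullet g=xg$, $\partial_x\bullet g=\partial g/\partial x$, etc. $\mathbb N=\{0,1,2,\dots\}$. *)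

theory Defs
  imports Complex_Main "HOL-Library.Poly_Mapping" "HOL-Library.Product_Plus"
    "HOL-Computational_Algebra.Polynomial"
begin

text \<open>A polynomial in C[x,y] is a finitely supported map from exponent pairs (i,j)
  (standing for x^i y^j) to coefficients; multiplication is the convolution product.\<close>
type_synonym cpoly2 = "(nat \<times> nat) \<Rightarrow>\<^sub>0 complex"

text \<open>Normally ordered monomial x^a y^b dx^c dy^e.\<close>
datatype wmon = WM nat nat nat nat

type_synonym weyl2 = "wmon \<Rightarrow>\<^sub>0 complex"

definition ffact_c :: "nat \<Rightarrow> nat \<Rightarrow> complex" where
  "ffact_c a k = of_nat (fact a) / of_nat (fact (a - k))"

text \<open>Product in D_2, from the normal-ordering rule
  dx^c x^a = sum_k (c choose k) a!/(a-k)! x^(a-k) dx^(c-k) (and likewise for y).\<close>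
fun wmon_mult :: "complex \<Rightarrow> wmon \<Rightarrow> complex \<Rightarrow> wmon \<Rightarrow> weyl2" where
  "wmon_mult u (WM a1 b1 c1 e1) v (WM a2 b2 c2 e2) =
     (\<Sum>k1\<in>{..min c1 a2}. \<Sum>k2\<in>{..min e1 b2}.
        Poly_Mapping.single (WM (a1 + a2 - k1) (b1 + b2 - k2) (c1 + c2 - k1) (e1 + e2 - k2))
          (u * v * of_nat (c1 choose k1) * ffact_c a2 k1 * of_nat (e1 choose k2) * ffact_c b2 k2))"

definition wmult :: "weyl2 \<Rightarrow> weyl2 \<Rightarrow> weyl2" (infixl "\<star>" 70) where
  "P \<star> Q = (\<Sum>m1\<in>Poly_Mapping.keys P. \<Sum>m2\<in>Poly_Mapping.keys Q. wmon_mult (Poly_Mapping.lookup P m1) m1 (Poly_Mapping.lookup Q m2) m2)"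

definition wone :: weyl2 where
  "wone = Poly_Mapping.single (WM 0 0 0 0) 1"

fun wpow :: "weyl2 \<Rightarrow> nat \<Rightarrow> weyl2" where
  "wpow P 0 = wone"
| "wpow P (Suc n) = P \<star> wpow P n"

text \<open>Action of D_2 on C[x,y]: x acts by multiplication, dx by d/dx, etc.\<close>
fun wmon_act :: "wmon \<Rightarrow> nat \<times> nat \<Rightarrow> complex \<Rightarrow> cpoly2" where
  "wmon_act (WM a b c e) (i, j) u =
     (if c \<le> i \<and> e \<le> j
      then Poly_Mapping.single (i - c + a, j - e + b) (u * ffact_c i c * ffact_c j e)
      else 0)"

definition wact :: "weyl2 \<Rightarrow> cpoly2 \<Rightarrow> cpoly2" where
  "wact P g = (\<Sum>m\<in>Poly_Mapping.keys P. \<Sum>ij\<in>Poly_Mapping.keys g. wmon_act m ij (Poly_Mapping.lookup P m * Poly_Mapping.lookup g ij))"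

definition Ann :: "cpoly2 \<Rightarrow> weyl2 set" where
  "Ann g = {P. wact P g = 0}"

inductive_set left_ideal_gen :: "weyl2 set \<Rightarrow> weyl2 set" for G where
  zero: "0 \<in> left_ideal_gen G"
| gen: "g \<in> G \<Longrightarrow> Q \<star> g \<in> left_ideal_gen G"
| add: "P \<in> left_ideal_gen G \<Longrightarrow> R \<in> left_ideal_gen G \<Longrightarrow> P + R \<in> left_ideal_gen G"

fun wweight :: "real \<times> real \<Rightarrow> wmon \<Rightarrow> real" where
  "wweight (w1, w2) (WM a b c e) = - w1 * a - w2 * b + w1 * c + w2 * e"

definition init_form :: "real \<times> real \<Rightarrow> weyl2 \<Rightarrow> weyl2" where
  "init_form w P =
     (\<Sum>m\<in>{m\<in>Poly_Mapping.keys P. wweight w m = Max (wweight w ` Poly_Mapping.keys P)}.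
        Poly_Mapping.single m (Poly_Mapping.lookup P m))"

definition init_ideal :: "real \<times> real \<Rightarrow> weyl2 set \<Rightarrow> weyl2 set" where
  "init_ideal w I = left_ideal_gen (init_form w ` I)"

text \<open>s = w1 x dx + w2 y dy\<close>
fun s_op :: "real \<times> real \<Rightarrow> weyl2" where
  "s_op (w1, w2) = Poly_Mapping.single (WM 1 0 1 0) (complex_of_real w1)
                 + Poly_Mapping.single (WM 0 1 0 1) (complex_of_real w2)"

definition eval_s :: "real \<times> real \<Rightarrow> complex poly \<Rightarrow> weyl2" where
  "eval_s w b = (\<Sum>i\<le>degree b. Poly_Mapping.single (WM 0 0 0 0) (coeff b i) \<star> wpow (s_op w) i)"

text \<open>b is the b-function of I w.r.t. w: the monic generator of in(I) \<inter> C[s].\<close>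
definition is_b_function :: "weyl2 set \<Rightarrow> real \<times> real \<Rightarrow> complex poly \<Rightarrow> bool" where
  "is_b_function I w b \<longleftrightarrow>
     lead_coeff b = 1 \<and> {c. eval_s w c \<in> init_ideal w I} = {c. b dvd c}"

definition f_pq :: "nat \<Rightarrow> nat \<Rightarrow> cpoly2" where
  "f_pq p q = Poly_Mapping.single (p, 0) 1 + Poly_Mapping.single (0, q) 1"

end

theory Submission
  imports Defs
begin


lemma wmon_act_zero[simp]: "wmon_act m ij 0 = 0"
  by (cases m; cases ij) (simp add: wmon_act.simps)

definition ff :: "nat \<Rightarrow> nat \<Rightarrow> nat" where
  "ff a k = (a choose k) * fact k"

lemma ff_zero_iff: "ff a k = 0 \<longleftrightarrow> a < k"
  by (auto simp: ff_def)

lemma ffact_c_ff: "k \<le> a \<Longrightarrow> ffact_c a k = of_nat (ff a k)"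
proof -
  assume "k \<le> a"
  then have "fact k * fact (a-k) * (a choose k) = (fact a :: nat)"
    by (rule binomial_fact_lemma)
  then have "(of_nat (fact a) :: complex) = of_nat (ff a k) * of_nat (fact (a-k))"
    unfolding ff_def by (metis mult.commute mult.left_commute of_nat_mult)
  then show ?thesis unfolding ffact_c_def by simp
qed

lemma wmon_act_alt: "wmon_act (WM a b c e) (i,j) u =
   Poly_Mapping.single (i-c+a, j-e+b) (u * of_nat (ff i c) * of_nat (ff j e))"
  proof (cases "c \<le> i \<and> e \<le> j")
  case True then show ?thesis by (simp add: ffact_c_ff)
next
  case False
  then have "ff i c = 0 \<or> ff j e = 0" by (auto simp: ff_zero_iff)
  then show ?thesis using False by auto
qed

lemma ff_pos: "0 < ff a k \<longleftrightarrow> k \<le> a"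
  using ff_zero_iff[of a k] by auto

declare wmon_act.simps[simp del]
declare wmon_act_alt[simp]

lemma ff_self_nz: "ff a a \<noteq> 0" by (simp add: ff_zero_iff)

lemma wact_superset:
  assumes "finite A" "Poly_Mapping.keys P \<subseteq> A" "finite B" "Poly_Mapping.keys g \<subseteq> B"
  shows "wact P g = (\<Sum>m\<in>A. \<Sum>ij\<in>B. wmon_act m ij (Poly_Mapping.lookup P m * Poly_Mapping.lookup g ij))"
proof -
  have "wact P g = (\<Sum>m\<in>A. \<Sum>ij\<in>Poly_Mapping.keys g. wmon_act m ij (Poly_Mapping.lookup P m * Poly_Mapping.lookup g ij))"
    unfolding wact_def
    by (rule sum.mono_neutral_left) (use assms in \<open>auto simp: in_keys_iff\<close>)
  also have "\<dots> = (\<Sum>m\<in>A. \<Sum>ij\<in>B. wmon_act m ij (Poly_Mapping.lookup P m * Poly_Mapping.lookup g ij))"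
    by (rule sum.cong[OF refl], rule sum.mono_neutral_left) (use assms in \<open>auto simp: in_keys_iff\<close>)
  finally show ?thesis .
qed

lemma wact_add_left: "wact (P + Q) g = wact P g + wact Q g"
proof -
  let ?A = "Poly_Mapping.keys P \<union> Poly_Mapping.keys Q \<union> Poly_Mapping.keys (P+Q)"
  have "wact (P + Q) g = (\<Sum>m\<in>?A. \<Sum>ij\<in>Poly_Mapping.keys g. wmon_act m ij (Poly_Mapping.lookup (P+Q) m * Poly_Mapping.lookup g ij))"
    by (rule wact_superset) auto
  moreover have "wact P g = (\<Sum>m\<in>?A. \<Sum>ij\<in>Poly_Mapping.keys g. wmon_act m ij (Poly_Mapping.lookup P m * Poly_Mapping.lookup g ij))"
    by (rule wact_superset) auto
  moreover have "wact Q g = (\<Sum>m\<in>?A. \<Sum>ij\<in>Poly_Mapping.keys g. wmon_act m ij (Poly_Mapping.lookup Q m * Poly_Mapping.lookup g ij))"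
    by (rule wact_superset) auto
  moreover have "\<And>m ij u v. wmon_act m ij (u + v) = wmon_act m ij u + wmon_act m ij v"
    by (case_tac m; case_tac ij) (simp add: wmon_act.simps single_add algebra_simps)
  ultimately show ?thesis
    by (simp add: lookup_add distrib_right sum.distrib)
qed

lemma wact_add_right: "wact P (g + h) = wact P g + wact P h"
proof -
  let ?B = "Poly_Mapping.keys g \<union> Poly_Mapping.keys h \<union> Poly_Mapping.keys (g+h)"
  have "wact P (g+h) = (\<Sum>m\<in>Poly_Mapping.keys P. \<Sum>ij\<in>?B. wmon_act m ij (Poly_Mapping.lookup P m * Poly_Mapping.lookup (g+h) ij))"
    by (rule wact_superset) auto
  moreover have "wact P g = (\<Sum>m\<in>Poly_Mapping.keys P. \<Sum>ij\<in>?B. wmon_act m ij (Poly_Mapping.lookup P m * Poly_Mapping.lookup g ij))"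
    by (rule wact_superset) auto
  moreover have "wact P h = (\<Sum>m\<in>Poly_Mapping.keys P. \<Sum>ij\<in>?B. wmon_act m ij (Poly_Mapping.lookup P m * Poly_Mapping.lookup h ij))"
    by (rule wact_superset) auto
  moreover have "\<And>m ij u v. wmon_act m ij (u + v) = wmon_act m ij u + wmon_act m ij v"
    by (case_tac m; case_tac ij) (simp add: wmon_act.simps single_add algebra_simps)
  ultimately show ?thesis
    by (simp add: lookup_add distrib_left sum.distrib)
qed

lemma wact_zero_left[simp]: "wact 0 g = 0" by (simp add: wact_def)
lemma wact_zero_right[simp]: "wact P 0 = 0" by (simp add: wact_def)

lemma wact_sum_left: "wact (\<Sum>x\<in>S. F x) g = (\<Sum>x\<in>S. wact (F x) g)"
  by (induction S rule: infinite_finite_induct) (auto simp: wact_add_left)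

lemma wact_sum_right: "wact P (\<Sum>x\<in>S. F x) = (\<Sum>x\<in>S. wact P (F x))"
  by (induction S rule: infinite_finite_induct) (auto simp: wact_add_right)

lemma wact_uminus_left: "wact (- P) g = - wact P g"
  proof -
  have "wact P g + wact (-P) g = 0" using wact_add_left[of P "-P" g] by simp
  then show ?thesis by (simp add: add_eq_0_iff)
qed

lemma wact_diff_left: "wact (P - Q) g = wact P g - wact Q g"
  using wact_add_left[of P "-Q" g] by (simp add: wact_uminus_left)

lemma wact_single_single: "wact (Poly_Mapping.single m u) (Poly_Mapping.single ij v) = wmon_act m ij (u * v)"
  by (subst wact_superset[of "{m}" _ "{ij}"]) auto

lemma pm_decomp: "(g::'a \<Rightarrow>\<^sub>0 'b::comm_monoid_add) = (\<Sum>x\<in>Poly_Mapping.keys g. Poly_Mapping.single x (Poly_Mapping.lookup g x))"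
  by (rule poly_mapping_eqI) (simp add: lookup_sum lookup_single when_def in_keys_iff sum.delta' split: if_splits)


lemma ff_0[simp]: "ff a 0 = 1" by (simp add: ff_def)

lemma ff_Suc: "ff a (Suc k) = ff a k * (a - k)"
proof -
  have h: "Suc k * (a choose Suc k) = (a - k) * (a choose k)"
    using binomial_absorption[of k a] binomial_absorb_comp[of a k] by simp
  have "ff a (Suc k) = (Suc k * (a choose Suc k)) * fact k"
    unfolding ff_def by (simp only: fact_Suc of_nat_id mult_ac)
  also have "\<dots> = ff a k * (a - k)" unfolding h ff_def by (simp only: mult_ac)
  finally show ?thesis .
qed

lemma ff_split: "ff i (c + t) = ff i c * ff (i - c) t"
  by (induction t) (auto simp: ff_Suc algebra_simps)

lemma ff_vandermonde: "(\<Sum>k\<le>r. (r choose k) * ff m k * ff n (r - k)) = ff (m + n) r"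
proof -
  have "(\<Sum>k\<le>r. (r choose k) * ff m k * ff n (r - k)) = (\<Sum>k\<le>r. fact r * ((m choose k) * (n choose (r - k))))"
  proof (rule sum.cong[OF refl])
    fix k assume "k \<in> {..r}"
    then have "fact k * fact (r-k) * (r choose k) = (fact r :: nat)"
      by (intro binomial_fact_lemma) auto
    then show "(r choose k) * ff m k * ff n (r - k) = fact r * ((m choose k) * (n choose (r - k)))"
      unfolding ff_def by (metis (no_types, lifting) mult.commute mult.left_commute)
  qed
  also have "\<dots> = fact r * ((m + n) choose r)"
    by (simp add: sum_distrib_left[symmetric] vandermonde)
  finally show ?thesis by (simp add: ff_def mult.commute)
qed

lemma ff_X: "(\<Sum>k\<le>min c1 a2. (c1 choose k) * ff a2 k * ff i (c1 + c2 - k)) = ff i c2 * ff (i - c2 + a2) c1"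
proof -
  have "(\<Sum>k\<le>min c1 a2. (c1 choose k) * ff a2 k * ff i (c1 + c2 - k)) =
        (\<Sum>k\<le>c1. (c1 choose k) * ff a2 k * ff i (c1 + c2 - k))"
    by (rule sum.mono_neutral_left) (auto simp: ff_zero_iff)
  also have "\<dots> = (\<Sum>k\<le>c1. ff i c2 * ((c1 choose k) * ff a2 k * ff (i - c2) (c1 - k)))"
  proof (rule sum.cong[OF refl])
    fix k assume "k \<in> {..c1}"
    then have "c1 + c2 - k = c2 + (c1 - k)" by auto
    then show "(c1 choose k) * ff a2 k * ff i (c1 + c2 - k) = ff i c2 * ((c1 choose k) * ff a2 k * ff (i - c2) (c1 - k))"
      by (simp add: ff_split)
  qed
  also have "\<dots> = ff i c2 * ff (a2 + (i - c2)) c1"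
    by (simp add: sum_distrib_left[symmetric] ff_vandermonde)
  finally show ?thesis by (simp add: add.commute)
qed

lemma sum_single: "(\<Sum>x\<in>S. Poly_Mapping.single t (h x)) = Poly_Mapping.single t (\<Sum>x\<in>S. h x)"
  by (induction S rule: infinite_finite_induct) (auto simp: single_add)

lemma ffact_c_le: "k \<le> min c a \<Longrightarrow> ffact_c a k = of_nat (ff a k)"
  by (simp add: ffact_c_ff)

lemma wact_wmon_mult:
  "wact (wmon_mult u m1 v m2) (Poly_Mapping.single ij w) =
   wact (Poly_Mapping.single m1 u) (wact (Poly_Mapping.single m2 v) (Poly_Mapping.single ij w))"
proof -
  obtain a1 b1 c1 e1 where m1: "m1 = WM a1 b1 c1 e1" by (cases m1)
  obtain a2 b2 c2 e2 where m2: "m2 = WM a2 b2 c2 e2" by (cases m2)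
  obtain i j where ij: "ij = (i, j)" by (cases ij)
  define posR where "posR = (i - c2 + a2 - c1 + a1, j - e2 + b2 - e1 + b1)"
  define X where "X k1 = (c1 choose k1) * ff a2 k1 * ff i (c1 + c2 - k1)" for k1
  define Y where "Y k2 = (e1 choose k2) * ff b2 k2 * ff j (e1 + e2 - k2)" for k2
  have RHS: "wact (Poly_Mapping.single m1 u) (wact (Poly_Mapping.single m2 v) (Poly_Mapping.single ij w)) =
     Poly_Mapping.single posR (u * v * w * of_nat (ff i c2 * ff (i - c2 + a2) c1) * of_nat (ff j e2 * ff (j - e2 + b2) e1))"
    by (simp add: m1 m2 ij wact_single_single wmon_act_alt posR_def algebra_simps)
  have LHS: "wact (wmon_mult u m1 v m2) (Poly_Mapping.single ij w) =
     (\<Sum>k1\<in>{..min c1 a2}. \<Sum>k2\<in>{..min e1 b2}. Poly_Mapping.single posR (u * v * w * of_nat (X k1) * of_nat (Y k2)))"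
    unfolding m1 m2 ij wmon_mult.simps wact_sum_left
  proof (intro sum.cong[OF refl])
    fix k1 k2 assume k1: "k1 \<in> {..min c1 a2}" and k2: "k2 \<in> {..min e1 b2}"
    have eq: "wact (Poly_Mapping.single (WM (a1 + a2 - k1) (b1 + b2 - k2) (c1 + c2 - k1) (e1 + e2 - k2))
              (u * v * of_nat (c1 choose k1) * ffact_c a2 k1 * of_nat (e1 choose k2) * ffact_c b2 k2))
           (Poly_Mapping.single (i, j) w) =
          Poly_Mapping.single (i - (c1 + c2 - k1) + (a1 + a2 - k1), j - (e1 + e2 - k2) + (b1 + b2 - k2))
            (u * v * w * of_nat (X k1) * of_nat (Y k2))"
    proof -
      have "k1 \<le> a2" "k2 \<le> b2" using k1 k2 by auto
      then show ?thesis by (simp add: wact_single_single ffact_c_ff X_def Y_def algebra_simps)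
    qed
    show "wact (Poly_Mapping.single (WM (a1 + a2 - k1) (b1 + b2 - k2) (c1 + c2 - k1) (e1 + e2 - k2))
              (u * v * of_nat (c1 choose k1) * ffact_c a2 k1 * of_nat (e1 choose k2) * ffact_c b2 k2))
           (Poly_Mapping.single (i, j) w) = Poly_Mapping.single posR (u * v * w * of_nat (X k1) * of_nat (Y k2))"
    proof (cases "X k1 = 0 \<or> Y k2 = 0")
      case True then show ?thesis unfolding eq by auto
    next
      case False
      then have "c1 + c2 - k1 \<le> i" "e1 + e2 - k2 \<le> j"
        by (auto simp: X_def Y_def ff_zero_iff)
      then have "(i - (c1 + c2 - k1) + (a1 + a2 - k1), j - (e1 + e2 - k2) + (b1 + b2 - k2)) = posR"
        using k1 k2 unfolding posR_def by auto
      then show ?thesis unfolding eq by simp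
    qed
  qed
  also have "\<dots> = Poly_Mapping.single posR (u * v * w * of_nat (\<Sum>k1\<le>min c1 a2. X k1) * of_nat (\<Sum>k2\<le>min e1 b2. Y k2))"
    by (simp add: sum_single sum_distrib_left sum_distrib_right algebra_simps)
  also have "\<dots> = Poly_Mapping.single posR (u * v * w * of_nat (ff i c2 * ff (i - c2 + a2) c1) * of_nat (ff j e2 * ff (j - e2 + b2) e1))"
    unfolding X_def Y_def ff_X by simp
  finally show ?thesis using RHS by simp
qed


lemma wact_decomp_right: "wact X g = (\<Sum>ij\<in>Poly_Mapping.keys g. wact X (Poly_Mapping.single ij (Poly_Mapping.lookup g ij)))"
proof -
  have "wact X g = wact X (\<Sum>ij\<in>Poly_Mapping.keys g. Poly_Mapping.single ij (Poly_Mapping.lookup g ij))"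
    by (rule arg_cong[where f="wact X"], rule pm_decomp)
  then show ?thesis by (simp add: wact_sum_right)
qed

lemma wact_decomp_left: "wact P h = (\<Sum>m\<in>Poly_Mapping.keys P. wact (Poly_Mapping.single m (Poly_Mapping.lookup P m)) h)"
proof -
  have "wact P h = wact (\<Sum>m\<in>Poly_Mapping.keys P. Poly_Mapping.single m (Poly_Mapping.lookup P m)) h"
    by (rule arg_cong[where f="\<lambda>X. wact X h"], rule pm_decomp)
  then show ?thesis by (simp add: wact_sum_left)
qed

lemma wact_mult: "wact (P \<star> Q) g = wact P (wact Q g)"
proof -
  have "wact (P \<star> Q) g = (\<Sum>m1\<in>Poly_Mapping.keys P. \<Sum>m2\<in>Poly_Mapping.keys Q. \<Sum>ij\<in>Poly_Mapping.keys g.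
      wact (Poly_Mapping.single m1 (Poly_Mapping.lookup P m1)) (wact (Poly_Mapping.single m2 (Poly_Mapping.lookup Q m2)) (Poly_Mapping.single ij (Poly_Mapping.lookup g ij))))"
    unfolding wmult_def wact_sum_left
    by (subst wact_decomp_right) (simp add: wact_wmon_mult)
  also have "\<dots> = (\<Sum>m2\<in>Poly_Mapping.keys Q. \<Sum>ij\<in>Poly_Mapping.keys g. \<Sum>m1\<in>Poly_Mapping.keys P.
      wact (Poly_Mapping.single m1 (Poly_Mapping.lookup P m1)) (wact (Poly_Mapping.single m2 (Poly_Mapping.lookup Q m2)) (Poly_Mapping.single ij (Poly_Mapping.lookup g ij))))"
    by (subst sum.swap) (simp add: sum.swap[where A="Poly_Mapping.keys P"])
  also have "\<dots> = (\<Sum>m2\<in>Poly_Mapping.keys Q. \<Sum>ij\<in>Poly_Mapping.keys g.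
      wact P (wact (Poly_Mapping.single m2 (Poly_Mapping.lookup Q m2)) (Poly_Mapping.single ij (Poly_Mapping.lookup g ij))))"
    by (subst (2) wact_decomp_left) simp
  also have "\<dots> = wact P (wact Q g)"
    unfolding wact_def[of Q g] wact_sum_right by (simp add: wact_single_single)
  finally show ?thesis .
qed

lemma wact_single_unit: "wact P (Poly_Mapping.single ij 1) = (\<Sum>m\<in>Poly_Mapping.keys P. wmon_act m ij (Poly_Mapping.lookup P m))"
  by (subst wact_superset[of _ _ "{ij}"]) auto

fun cdeg :: "wmon \<Rightarrow> nat" where "cdeg (WM a b c e) = c + e"

lemma faithful0:
  assumes "\<And>i j. wact P (Poly_Mapping.single (i,j) 1) = 0"
  shows "P = 0"
proof (rule ccontr)
  assume "P \<noteq> 0"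
  then have ne: "Poly_Mapping.keys P \<noteq> {}" by simp
  let ?M = "Min (cdeg ` Poly_Mapping.keys P)"
  have "?M \<in> cdeg ` Poly_Mapping.keys P" using ne by (intro Min_in) auto
  then obtain m0 where m0: "m0 \<in> Poly_Mapping.keys P" "cdeg m0 = ?M" by auto
  have minm: "\<And>m. m \<in> Poly_Mapping.keys P \<Longrightarrow> cdeg m0 \<le> cdeg m"
    using m0(2) by (simp add: Min_le)
  obtain a0 b0 c0 e0 where m0e: "m0 = WM a0 b0 c0 e0" by (cases m0)
  have other: "Poly_Mapping.lookup (wmon_act m (c0, e0) (Poly_Mapping.lookup P m)) (a0, b0) = 0"
    if "m \<in> Poly_Mapping.keys P - {m0}" for m
  proof -
    obtain a b c e where me: "m = WM a b c e" by (cases m)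
    have "cdeg m0 \<le> cdeg m" using that minm by auto
    then have le: "c0 + e0 \<le> c + e" by (simp add: me m0e)
    show ?thesis
    proof (cases "c \<le> c0 \<and> e \<le> e0")
      case True
      then have "c = c0" "e = e0" using le by auto
      then have "(a, b) \<noteq> (a0, b0)" using that me m0e by auto
      then show ?thesis using True \<open>c = c0\<close> \<open>e = e0\<close> by (simp add: me lookup_single)
    next
      case False then have "ff c0 c = 0 \<or> ff e0 e = 0" by (auto simp: ff_zero_iff)
      then show ?thesis by (auto simp: me)
    qed
  qed
  have "Poly_Mapping.lookup (wact P (Poly_Mapping.single (c0,e0) 1)) (a0, b0) =
        (\<Sum>m\<in>Poly_Mapping.keys P. Poly_Mapping.lookup (wmon_act m (c0, e0) (Poly_Mapping.lookup P m)) (a0, b0))"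
    by (simp add: wact_single_unit lookup_sum)
  also have "\<dots> = Poly_Mapping.lookup (wmon_act m0 (c0, e0) (Poly_Mapping.lookup P m0)) (a0, b0)"
    using m0(1) other by (subst sum.remove[of _ m0]) auto
  also have "\<dots> = Poly_Mapping.lookup P m0 * of_nat (ff c0 c0) * of_nat (ff e0 e0)"
    by (simp add: m0e)
  also have "\<dots> \<noteq> 0" using m0(1) by (simp add: ff_self_nz in_keys_iff)
  finally show False using assms by simp
qed

lemma faithful:
  assumes "\<And>i j. wact P (Poly_Mapping.single (i,j) 1) = wact Q (Poly_Mapping.single (i,j) 1)"
  shows "P = Q"
  using faithful0[of "P - Q"] assms by (simp add: wact_diff_left)


lemma ff_1[simp]: "ff i (Suc 0) = i" by (simp add: ff_Suc)

lemma wact_mon_x: "wact (Poly_Mapping.single (WM (Suc 0) 0 (Suc 0) 0) u) (Poly_Mapping.single (i,j) v) =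
   Poly_Mapping.single (i,j) (u * of_nat i * v)"
  by (cases i) (simp_all add: wact_single_single algebra_simps)

lemma wact_mon_y: "wact (Poly_Mapping.single (WM 0 (Suc 0) 0 (Suc 0)) u) (Poly_Mapping.single (i,j) v) =
   Poly_Mapping.single (i,j) (u * of_nat j * v)"
  by (cases j) (simp_all add: wact_single_single algebra_simps)

lemma wact_mon_1: "wact (Poly_Mapping.single (WM 0 0 0 0) u) (Poly_Mapping.single (i,j) v) =
   Poly_Mapping.single (i,j) (u * v)"
  by (simp add: wact_single_single wmon_act_alt)

lemma wact_wone: "wact wone (Poly_Mapping.single (i,j) v) = Poly_Mapping.single (i,j) v"
  by (simp add: wone_def wact_mon_1)

definition lam :: "real \<times> real \<Rightarrow> nat \<times> nat \<Rightarrow> complex" where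
  "lam w ij = complex_of_real (fst w * real (fst ij) + snd w * real (snd ij))"

lemma wact_s_op: "wact (s_op w) (Poly_Mapping.single (i,j) v) = Poly_Mapping.single (i,j) (lam w (i,j) * v)"
proof -
  obtain w1 w2 where w: "w = (w1, w2)" by (cases w)
  show ?thesis
    by (simp add: w wact_add_left wact_mon_x wact_mon_y lam_def single_add[symmetric] algebra_simps)
qed

lemma wact_wpow_s: "wact (wpow (s_op w) n) (Poly_Mapping.single (i,j) v) = Poly_Mapping.single (i,j) (lam w (i,j) ^ n * v)"
  by (induction n arbitrary: v) (simp_all add: wact_wone wact_mult wact_s_op algebra_simps)

lemma wact_eval_s: "wact (eval_s w c) (Poly_Mapping.single (i,j) v) = Poly_Mapping.single (i,j) (poly c (lam w (i,j)) * v)"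
  unfolding eval_s_def wact_sum_left wact_mult wact_wpow_s wact_mon_1 sum_single poly_altdef sum_distrib_right mult.assoc ..

lemma eval_s_mult: "eval_s w (r * b) = eval_s w r \<star> eval_s w b"
  by (rule faithful) (simp add: wact_mult wact_eval_s)

lemma eval_s_lin:
  "eval_s (w1, w2) [:- c0, 1:] = Poly_Mapping.single (WM 1 0 1 0) (complex_of_real w1) +
      Poly_Mapping.single (WM 0 1 0 1) (complex_of_real w2) + Poly_Mapping.single (WM 0 0 0 0) (- c0)"
  by (rule faithful) (simp add: wact_eval_s wact_add_left wact_mon_x wact_mon_y wact_mon_1 lam_def single_add[symmetric] algebra_simps)


definition degr :: "real \<times> real \<Rightarrow> nat \<times> nat \<Rightarrow> real" where
  "degr w ij = fst w * real (fst ij) + snd w * real (snd ij)"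

lemma lam_degr: "lam w ij = complex_of_real (degr w ij)"
  by (simp add: lam_def degr_def)

definition restr :: "('a \<Rightarrow> bool) \<Rightarrow> ('a \<Rightarrow>\<^sub>0 complex) \<Rightarrow> ('a \<Rightarrow>\<^sub>0 complex)" where
  "restr Q g = (\<Sum>x\<in>{x\<in>Poly_Mapping.keys g. Q x}. Poly_Mapping.single x (Poly_Mapping.lookup g x))"

lemma lookup_restr: "Poly_Mapping.lookup (restr Q g) y = (if Q y then Poly_Mapping.lookup g y else 0)"
  by (auto simp: restr_def lookup_sum lookup_single when_def in_keys_iff)

lemma keys_restr: "Poly_Mapping.keys (restr Q g) \<subseteq> Poly_Mapping.keys g"
  by (auto simp: in_keys_iff lookup_restr split: if_splits)

lemma init_form_restr: "init_form w P = restr (\<lambda>m. wweight w m = Max (wweight w ` Poly_Mapping.keys P)) P"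
  by (simp add: init_form_def restr_def)

lemma wmon_act_deg:
  assumes "Poly_Mapping.lookup (wmon_act m ij u) t \<noteq> 0"
  shows "degr w t = degr w ij - wweight w m"
proof -
  obtain a b c e where m: "m = WM a b c e" by (cases m)
  obtain i j where ij: "ij = (i, j)" by (cases ij)
  obtain w1 w2 where w: "w = (w1, w2)" by (cases w)
  from assms have "c \<le> i" "e \<le> j" "t = (i - c + a, j - e + b)"
    by (auto simp: m ij lookup_single when_def ff_pos split: if_splits)
  then show ?thesis by (simp add: degr_def w m ij of_nat_diff algebra_simps)
qed

lemma lower_init:
  assumes Pg: "wact P g = 0" and lb: "\<And>ij. ij \<in> Poly_Mapping.keys g \<Longrightarrow> d0 \<le> degr w ij"
  shows "wact (init_form w P) (restr (\<lambda>ij. degr w ij = d0) g) = 0"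
proof (cases "P = 0")
  case True then show ?thesis by (simp add: init_form_def)
next
  case False
  define W where "W = Max (wweight w ` Poly_Mapping.keys P)"
  have Wle: "\<And>m. m \<in> Poly_Mapping.keys P \<Longrightarrow> wweight w m \<le> W" unfolding W_def by simp
  have e1: "wact (init_form w P) (restr (\<lambda>ij. degr w ij = d0) g) =
     (\<Sum>m\<in>Poly_Mapping.keys P. \<Sum>ij\<in>Poly_Mapping.keys g. wmon_act m ij
        (Poly_Mapping.lookup (init_form w P) m * Poly_Mapping.lookup (restr (\<lambda>ij. degr w ij = d0) g) ij))"
    by (rule wact_superset) (auto simp: init_form_restr intro: keys_restr[THEN subsetD])
  show ?thesis
  proof (rule poly_mapping_eqI)
    fix t
    have trm: "Poly_Mapping.lookup (wmon_act m ij
        (Poly_Mapping.lookup (init_form w P) m * Poly_Mapping.lookup (restr (\<lambda>ij. degr w ij = d0) g) ij)) t =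
        (if degr w t = d0 - W then Poly_Mapping.lookup (wmon_act m ij (Poly_Mapping.lookup P m * Poly_Mapping.lookup g ij)) t else 0)"
      if m: "m \<in> Poly_Mapping.keys P" and ij: "ij \<in> Poly_Mapping.keys g" for m ij
    proof -
      have A: "Poly_Mapping.lookup (init_form w P) m * Poly_Mapping.lookup (restr (\<lambda>ij. degr w ij = d0) g) ij =
            (if wweight w m = W \<and> degr w ij = d0 then Poly_Mapping.lookup P m * Poly_Mapping.lookup g ij else 0)"
        by (simp add: init_form_restr lookup_restr W_def[symmetric])
      show ?thesis
      proof (cases "wweight w m = W \<and> degr w ij = d0")
        case True
        then show ?thesis using A wmon_act_deg[of m ij _ t w] by auto
      next
        case False
        have "Poly_Mapping.lookup (wmon_act m ij (Poly_Mapping.lookup P m * Poly_Mapping.lookup g ij)) t = 0"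
          if "degr w t = d0 - W"
        proof (rule ccontr)
          assume "Poly_Mapping.lookup (wmon_act m ij (Poly_Mapping.lookup P m * Poly_Mapping.lookup g ij)) t \<noteq> 0"
          from wmon_act_deg[OF this, of w] that have "degr w ij - wweight w m = d0 - W" by simp
          moreover have "d0 \<le> degr w ij" using lb ij by auto
          moreover have "wweight w m \<le> W" using Wle m by auto
          ultimately show False using False by auto
        qed
        then show ?thesis using A False by auto
      qed
    qed
    have "Poly_Mapping.lookup (wact (init_form w P) (restr (\<lambda>ij. degr w ij = d0) g)) t =
       (\<Sum>m\<in>Poly_Mapping.keys P. \<Sum>ij\<in>Poly_Mapping.keys g.
          (if degr w t = d0 - W then Poly_Mapping.lookup (wmon_act m ij (Poly_Mapping.lookup P m * Poly_Mapping.lookup g ij)) t else 0))"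
      unfolding e1 lookup_sum using trm by (intro sum.cong) auto
    also have "\<dots> = (if degr w t = d0 - W then Poly_Mapping.lookup (wact P g) t else 0)"
      by (simp add: wact_def lookup_sum)
    also have "\<dots> = 0" using Pg by simp
    finally show "Poly_Mapping.lookup (wact (init_form w P) (restr (\<lambda>ij. degr w ij = d0) g)) t = Poly_Mapping.lookup 0 t"
      by simp
  qed
qed

lemma ideal_kills:
  assumes "x \<in> left_ideal_gen (init_form w ` Ann g)"
    and lb: "\<And>ij. ij \<in> Poly_Mapping.keys g \<Longrightarrow> d0 \<le> degr w ij"
  shows "wact x (restr (\<lambda>ij. degr w ij = d0) g) = 0"
  using assms(1)
proof induction
  case zero then show ?case by simp
next
  case (gen h Q)
  then obtain P where "P \<in> Ann g" "h = init_form w P" by auto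
  then show ?case using lower_init[of P g d0 w] lb by (simp add: Ann_def wact_mult)
next
  case (add P R) then show ?case by (simp add: wact_add_left)
qed

lemma lower_bound:
  assumes "eval_s w c \<in> init_ideal w (Ann g)"
    and lb: "\<And>ij. ij \<in> Poly_Mapping.keys g \<Longrightarrow> d0 \<le> degr w ij"
    and t0: "t0 \<in> Poly_Mapping.keys g" "degr w t0 = d0"
  shows "poly c (complex_of_real d0) = 0"
proof -
  let ?gm = "restr (\<lambda>ij. degr w ij = d0) g"
  have z: "wact (eval_s w c) ?gm = 0"
    using ideal_kills[of "eval_s w c" w g d0] assms(1) lb by (simp add: init_ideal_def)
  have "wact (eval_s w c) ?gm = (\<Sum>ij\<in>Poly_Mapping.keys ?gm. Poly_Mapping.single ij (poly c (complex_of_real d0) * Poly_Mapping.lookup ?gm ij))"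
  proof (subst wact_decomp_right, rule sum.cong[OF refl])
    fix ij assume "ij \<in> Poly_Mapping.keys ?gm"
    then have "degr w ij = d0" by (auto simp: in_keys_iff lookup_restr split: if_splits)
    then show "wact (eval_s w c) (Poly_Mapping.single ij (Poly_Mapping.lookup ?gm ij)) =
         Poly_Mapping.single ij (poly c (complex_of_real d0) * Poly_Mapping.lookup ?gm ij)"
      by (cases ij) (simp add: wact_eval_s lam_degr)
  qed
  then have "Poly_Mapping.lookup (wact (eval_s w c) ?gm) t0 = poly c (complex_of_real d0) * Poly_Mapping.lookup ?gm t0"
    by (simp add: lookup_sum lookup_single when_def in_keys_iff)
  moreover have "Poly_Mapping.lookup ?gm t0 \<noteq> 0" using t0 by (simp add: lookup_restr in_keys_iff)
  ultimately show ?thesis using z by simp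
qed


lemma single_pow: "(Poly_Mapping.single (a, b) (1::complex)) ^ k = Poly_Mapping.single (a * k, b * k) 1"
  by (induction k) (simp_all add: mult_single zero_prod_def[symmetric])
lemma of_nat_times_single: "(of_nat n :: cpoly2) * Poly_Mapping.single t 1 = Poly_Mapping.single t (of_nat n)"
proof -
  have "(of_nat n :: cpoly2) = Poly_Mapping.single 0 (of_nat n)" by (rule single_of_nat[symmetric])
  then show ?thesis by (simp add: mult_single del: single_of_nat)
qed
lemma pow_binom:
  "(Poly_Mapping.single (a1, b1) 1 + Poly_Mapping.single (a2, b2) 1 :: cpoly2) ^ l =
   (\<Sum>m\<le>l. Poly_Mapping.single (a1 * m + a2 * (l - m), b1 * m + b2 * (l - m)) (of_nat (l choose m)))"
  by (simp add: binomial_ring single_pow mult_single of_nat_times_single mult.assoc)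

lemma fpow1: "f_pq p q ^ l = (\<Sum>m\<le>l. Poly_Mapping.single (p * m, q * (l - m)) (of_nat (l choose m)))"
  unfolding f_pq_def by (simp add: pow_binom)

lemma fpow2: "f_pq p q ^ l = (\<Sum>m\<le>l. Poly_Mapping.single (p * (l - m), q * m) (of_nat (l choose m)))"
  unfolding f_pq_def by (subst add.commute) (simp add: pow_binom)

lemma keys_fpow: "ij \<in> Poly_Mapping.keys (f_pq p q ^ l) \<Longrightarrow> \<exists>m\<le>l. ij = (p * m, q * (l - m))"
  using keys_sum[of "\<lambda>m. Poly_Mapping.single (p * m, q * (l - m)) (of_nat (l choose m) :: complex)" "{..l}"]
  unfolding fpow1 by (auto split: if_splits)

lemma lookup_fpow_x: "0 < p \<Longrightarrow> Poly_Mapping.lookup (f_pq p q ^ l) (p * l, 0) = 1"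
proof -
  assume p: "0 < p"
  have "((p * m, q * (l - m)) = (p * l, 0)) = (m = l)" for m
  proof
    assume "(p * m, q * (l - m)) = (p * l, 0)"
    then have "p * m = p * l" by simp
    then show "m = l" using p by simp
  qed simp
  then have "Poly_Mapping.lookup (f_pq p q ^ l) (p * l, 0) = (\<Sum>m\<le>l. if m = l then of_nat (l choose m) else 0)"
    unfolding fpow1 lookup_sum by (intro sum.cong) (auto simp: lookup_single when_def)
  then show ?thesis by simp
qed

lemma lookup_fpow_y: "0 < q \<Longrightarrow> Poly_Mapping.lookup (f_pq p q ^ l) (0, q * l) = 1"
proof -
  assume q: "0 < q"
  have "((p * (l - m), q * m) = (0, q * l)) = (m = l)" for m
  proof
    assume "(p * (l - m), q * m) = (0, q * l)"
    then have "q * m = q * l" by simp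
    then show "m = l" using q by simp
  qed simp
  then have "Poly_Mapping.lookup (f_pq p q ^ l) (0, q * l) = (\<Sum>m\<le>l. if m = l then of_nat (l choose m) else 0)"
    unfolding fpow2 lookup_sum by (intro sum.cong) (auto simp: lookup_single when_def)
  then show ?thesis by simp
qed

lemma tri_solve:
  fixes F :: "nat \<Rightarrow> nat \<Rightarrow> complex"
  assumes "\<And>n. n < N \<Longrightarrow> F n n \<noteq> 0"
  shows "\<exists>d. \<forall>n<N. (\<Sum>j\<le>n. F n j * d j) = v n"
  using assms
proof (induction N)
  case 0 then show ?case by simp
next
  case (Suc N)
  then obtain d where d: "\<forall>n<N. (\<Sum>j\<le>n. F n j * d j) = v n" by auto
  define d' where "d' = d(N := (v N - (\<Sum>j<N. F N j * d j)) / F N N)"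
  have "\<forall>n<Suc N. (\<Sum>j\<le>n. F n j * d' j) = v n"
  proof (intro allI impI)
    fix n assume n: "n < Suc N"
    show "(\<Sum>j\<le>n. F n j * d' j) = v n"
    proof (cases "n = N")
      case True
      have "(\<Sum>j\<le>N. F N j * d' j) = (\<Sum>j<N. F N j * d' j) + F N N * d' N"
        by (simp add: lessThan_Suc_atMost[symmetric])
      also have "(\<Sum>j<N. F N j * d' j) = (\<Sum>j<N. F N j * d j)"
        by (intro sum.cong) (auto simp: d'_def)
      finally show ?thesis using True Suc.prems[of N] by (simp add: d'_def)
    next
      case False
      then have "n < N" using n by simp
      then have "(\<Sum>j\<le>n. F n j * d' j) = (\<Sum>j\<le>n. F n j * d j)"
        by (intro sum.cong) (auto simp: d'_def)
      then show ?thesis using d \<open>n < N\<close> by simp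
    qed
  qed
  then show ?case by blast
qed

lemma init_split:
  assumes "A \<noteq> 0" and WA: "\<And>m. m \<in> Poly_Mapping.keys A \<Longrightarrow> wweight w m = W"
    and WL: "\<And>m. m \<in> Poly_Mapping.keys L \<Longrightarrow> wweight w m < W"
  shows "init_form w (A + L) = A"
proof -
  have disj: "m \<notin> Poly_Mapping.keys L" if "m \<in> Poly_Mapping.keys A" for m
    using WA[of m] WL[of m] that by auto
  have disj2: "m \<notin> Poly_Mapping.keys A" if "m \<in> Poly_Mapping.keys L" for m
    using WA[of m] WL[of m] that by auto
  have kAL: "Poly_Mapping.keys (A + L) = Poly_Mapping.keys A \<union> Poly_Mapping.keys L"
  proof (rule equalityI)
    show "Poly_Mapping.keys (A + L) \<subseteq> Poly_Mapping.keys A \<union> Poly_Mapping.keys L" by (rule keys_add)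
    show "Poly_Mapping.keys A \<union> Poly_Mapping.keys L \<subseteq> Poly_Mapping.keys (A + L)"
    proof (rule subsetI)
      fix x assume x: "x \<in> Poly_Mapping.keys A \<union> Poly_Mapping.keys L"
      show "x \<in> Poly_Mapping.keys (A + L)"
      proof (cases "x \<in> Poly_Mapping.keys A")
        case True
        have "Poly_Mapping.lookup L x = 0" using disj[OF True] by (simp add: not_in_keys_iff_lookup_eq_zero)
        moreover have "Poly_Mapping.lookup A x \<noteq> 0" using True by (simp add: lookup_not_eq_zero_eq_in_keys)
        ultimately have "Poly_Mapping.lookup (A + L) x \<noteq> 0" by (simp add: lookup_add)
        then show ?thesis by (simp add: lookup_not_eq_zero_eq_in_keys)
      next
        case False
        then have xL: "x \<in> Poly_Mapping.keys L" using x by blast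
        have "Poly_Mapping.lookup A x = 0" using False by (simp add: not_in_keys_iff_lookup_eq_zero)
        moreover have "Poly_Mapping.lookup L x \<noteq> 0" using xL by (simp add: lookup_not_eq_zero_eq_in_keys)
        ultimately have "Poly_Mapping.lookup (A + L) x \<noteq> 0" by (simp add: lookup_add)
        then show ?thesis by (simp add: lookup_not_eq_zero_eq_in_keys)
      qed
    qed
  qed
  have Mx: "Max (wweight w ` Poly_Mapping.keys (A + L)) = W"
  proof (rule Max_eqI)
    show "finite (wweight w ` Poly_Mapping.keys (A + L))" by simp
    show "\<And>y. y \<in> wweight w ` Poly_Mapping.keys (A + L) \<Longrightarrow> y \<le> W"
      unfolding kAL using WA WL by force
    obtain m where "m \<in> Poly_Mapping.keys A" using assms(1) by fastforce
    then show "W \<in> wweight w ` Poly_Mapping.keys (A + L)" unfolding kAL using WA by force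
  qed
  show ?thesis
  proof (rule poly_mapping_eqI)
    fix y
    show "Poly_Mapping.lookup (init_form w (A + L)) y = Poly_Mapping.lookup A y"
    proof (cases "wweight w y = W")
      case True
      then have "y \<notin> Poly_Mapping.keys L" using WL by force
      then show ?thesis using True by (simp add: init_form_restr Mx lookup_restr lookup_add in_keys_iff)
    next
      case False
      then have "y \<notin> Poly_Mapping.keys A" using WA by force
      then show ?thesis using False by (simp add: init_form_restr Mx lookup_restr in_keys_iff)
    qed
  qed
qed


lemma wact_A:
  "wact (Poly_Mapping.single (WM 1 0 1 0) (complex_of_real w1) + Poly_Mapping.single (WM 0 1 0 1) (complex_of_real w2)
        + Poly_Mapping.single (WM 0 0 0 0) (- c0)) (Poly_Mapping.single (i, j) v)
   = Poly_Mapping.single (i, j) ((complex_of_real w1 * of_nat i + complex_of_real w2 * of_nat j - c0) * v)"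
proof -
  have e: "WM 1 0 1 0 = WM (Suc 0) 0 (Suc 0) 0" "WM 0 1 0 1 = WM 0 (Suc 0) 0 (Suc 0)" by simp_all
  show ?thesis
    apply (simp only: e wact_add_left wact_mon_x wact_mon_y wact_mon_1 single_add[symmetric])
    apply (rule arg_cong[where f="Poly_Mapping.single (i,j)"])
    apply (simp add: algebra_simps)
    done
qed

lemma sum_lt_filter: "(m::nat) \<le> l \<Longrightarrow> (\<Sum>j<l. if j < m then g j else 0) = (\<Sum>j<m. g j)"
proof -
  assume m: "m \<le> l"
  have "(\<Sum>j<m. g j) = (\<Sum>j<m. if j < m then g j else 0)" by simp
  also have "\<dots> = (\<Sum>j<l. if j < m then g j else 0)"
    by (rule sum.mono_neutral_left) (use m in auto)
  finally show ?thesis by simp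
qed

lemma keys_wA0:
  assumes "m \<in> Poly_Mapping.keys (Poly_Mapping.single (WM 1 0 1 0) u1 + Poly_Mapping.single (WM 0 1 0 1) u2
        + Poly_Mapping.single (WM 0 0 0 0) (u3::complex))"
  shows "wweight w m = 0"
proof -
  have "Poly_Mapping.keys (Poly_Mapping.single (WM 1 0 1 0) u1 + Poly_Mapping.single (WM 0 1 0 1) u2
        + Poly_Mapping.single (WM 0 0 0 0) u3) \<subseteq> Poly_Mapping.keys (Poly_Mapping.single (WM 1 0 1 0) u1 + Poly_Mapping.single (WM 0 1 0 1) u2)
        \<union> Poly_Mapping.keys (Poly_Mapping.single (WM 0 0 0 0) u3)" by (rule keys_add)
  also have "\<dots> \<subseteq> Poly_Mapping.keys (Poly_Mapping.single (WM 1 0 1 0) u1) \<union> Poly_Mapping.keys (Poly_Mapping.single (WM 0 1 0 1) u2)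
        \<union> Poly_Mapping.keys (Poly_Mapping.single (WM 0 0 0 0) u3)"
    using keys_add[of "Poly_Mapping.single (WM 1 0 1 0) u1" "Poly_Mapping.single (WM 0 1 0 1) u2"] by (rule Un_mono) (rule order_refl)
  also have "\<dots> \<subseteq> {WM 1 0 1 0, WM 0 1 0 1, WM 0 0 0 0}" by (simp add: keys_single)
  finally have "m \<in> {WM 1 0 1 0, WM 0 1 0 1, WM 0 0 0 0}" using assms by (rule subsetD)
  then have "m = WM 1 0 1 0 \<or> m = WM 0 1 0 1 \<or> m = WM 0 0 0 0" by simp
  then show ?thesis by (cases w) auto
qed

lemma keys_wA: "m \<in> Poly_Mapping.keys (Poly_Mapping.single (WM 1 0 1 0) (complex_of_real w1) + Poly_Mapping.single (WM 0 1 0 1) (complex_of_real w2)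
        + Poly_Mapping.single (WM 0 0 0 0) (- c0)) \<Longrightarrow> wweight w m = 0"
  by (rule keys_wA0)

lemma A_nz: "(w1, w2) \<noteq> (0, 0) \<Longrightarrow> Poly_Mapping.single (WM 1 0 1 0) (complex_of_real w1) + Poly_Mapping.single (WM 0 1 0 1) (complex_of_real w2)
        + Poly_Mapping.single (WM 0 0 0 0) (- c0) \<noteq> 0"
proof
  assume nz: "(w1, w2) \<noteq> (0, 0)" and z: "Poly_Mapping.single (WM 1 0 1 0) (complex_of_real w1) + Poly_Mapping.single (WM 0 1 0 1) (complex_of_real w2)
        + Poly_Mapping.single (WM 0 0 0 0) (- c0) = 0"
  have "Poly_Mapping.lookup (Poly_Mapping.single (WM 1 0 1 0) (complex_of_real w1) + Poly_Mapping.single (WM 0 1 0 1) (complex_of_real w2)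
        + Poly_Mapping.single (WM 0 0 0 0) (- c0)) (WM 1 0 1 0) = 0" by (simp only: z lookup_zero)
  moreover have "Poly_Mapping.lookup (Poly_Mapping.single (WM 1 0 1 0) (complex_of_real w1) + Poly_Mapping.single (WM 0 1 0 1) (complex_of_real w2)
        + Poly_Mapping.single (WM 0 0 0 0) (- c0)) (WM 0 1 0 1) = 0" by (simp only: z lookup_zero)
  ultimately show False using nz by (simp add: lookup_add lookup_single)
qed


lemma case1:
  fixes p q l :: nat and w1 w2 :: real
  assumes p: "0 < p" and q: "0 < q" and le: "real p * w1 \<le> real q * w2" and nz: "(w1, w2) \<noteq> (0, 0)"
  shows "is_b_function (Ann (f_pq p q ^ l)) (w1, w2) [: - complex_of_real (real p * real l * w1), 1 :]"
proof -
  define c0 where "c0 = real p * real l * w1"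
  define k where "k = w2 - real p * w1 / real q"
  define F where "F n j = (of_nat (l choose (n+1)) * of_nat (ff (p*(n+1)) (p*(j+1))) :: complex)" for n j
  define v where "v n = - (of_nat q * of_nat (l - n) * of_nat (l choose n) :: complex)" for n
  have "\<And>n. n < l \<Longrightarrow> F n n \<noteq> 0" by (simp add: F_def ff_self_nz)
  then obtain d where d: "\<forall>n<l. (\<Sum>j\<le>n. F n j * d j) = v n" using tri_solve by blast
  define A where "A = Poly_Mapping.single (WM 1 0 1 0) (complex_of_real w1) + Poly_Mapping.single (WM 0 1 0 1) (complex_of_real w2)
        + Poly_Mapping.single (WM 0 0 0 0) (- complex_of_real c0)"
  define L where "L = (\<Sum>j<l. Poly_Mapping.single (WM (p*j) q (p*(j+1)) 0) (complex_of_real k * d j))"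
  define S where "S m = (\<Sum>j<m. d j * of_nat (ff (p*m) (p*(j+1))))" for m
  have L_act: "wact L (Poly_Mapping.single (p*m, q*(l-m)) u) =
      Poly_Mapping.single (p*(m-1), q*(l-m) + q) (complex_of_real k * u * S m)" if m: "m \<le> l" for m u
  proof -
    have "wact L (Poly_Mapping.single (p*m, q*(l-m)) u) =
       (\<Sum>j<l. Poly_Mapping.single (p*(m-1), q*(l-m) + q)
            (if j < m then complex_of_real k * u * (d j * of_nat (ff (p*m) (p*(j+1)))) else 0))"
      unfolding L_def wact_sum_left
    proof (rule sum.cong[OF refl])
      fix j assume "j \<in> {..<l}"
      show "wact (Poly_Mapping.single (WM (p*j) q (p*(j+1)) 0) (complex_of_real k * d j)) (Poly_Mapping.single (p*m, q*(l-m)) u) =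
        Poly_Mapping.single (p*(m-1), q*(l-m) + q) (if j < m then complex_of_real k * u * (d j * of_nat (ff (p*m) (p*(j+1)))) else 0)"
      proof (cases "j < m")
        case True
        then have "j+1 \<le> m" by simp
        then have "p*(j+1) \<le> p*m" by (rule mult_le_mono2)
        moreover have "p*(j+1) = p*j + p" by simp
        moreover have "p*(m-1) = p*m - p" by (simp add: diff_mult_distrib2)
        ultimately have pos: "p*m - p*(j+1) + p*j = p*(m-1)" by linarith
        show ?thesis using True
          by (simp only: wact_single_single wmon_act_alt pos) (simp add: algebra_simps)
      next
        case False
        then have "m < j+1" by simp
        then have "p*m < p*(j+1)" using p by (rule mult_less_mono2)
        then have "ff (p*m) (p*(j+1)) = 0" by (simp add: ff_zero_iff)
        then show ?thesis using False by (simp add: wact_single_single wmon_act_alt)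
      qed
    qed
    also have "\<dots> = Poly_Mapping.single (p*(m-1), q*(l-m) + q) (complex_of_real k * u * S m)"
      by (simp add: sum_single sum_lt_filter[OF m] S_def sum_distrib_left)
    finally show ?thesis .
  qed
  have A_act: "wact A (Poly_Mapping.single (p*m, q*(l-m)) u) =
      Poly_Mapping.single (p*m, q*(l-m)) (complex_of_real k * of_nat q * of_nat (l - m) * u)" if m: "m \<le> l" for m u
  proof -
    have "w1 * real (p*m) + w2 * real (q*(l-m)) - c0 = k * real q * real (l - m)"
      using m q by (simp add: c0_def k_def of_nat_diff field_simps)
    then have "complex_of_real w1 * of_nat (p*m) + complex_of_real w2 * of_nat (q*(l-m)) - complex_of_real c0
          = complex_of_real k * of_nat q * of_nat (l - m)"
      by (metis (mono_tags, lifting) of_real_diff of_real_add of_real_mult of_real_of_nat_eq)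
    then show ?thesis unfolding A_def wact_A by simp
  qed
  have Ann: "A + L \<in> Ann (f_pq p q ^ l)"
  proof -
    have "wact (A + L) (f_pq p q ^ l) =
       (\<Sum>m\<le>l. Poly_Mapping.single (p*m, q*(l-m)) (complex_of_real k * of_nat q * of_nat (l - m) * of_nat (l choose m)))
     + (\<Sum>m\<le>l. Poly_Mapping.single (p*(m-1), q*(l-m) + q) (complex_of_real k * of_nat (l choose m) * S m))"
      unfolding fpow1 wact_sum_right wact_add_left sum.distrib
      by (intro arg_cong2[where f="(+)"] sum.cong) (auto simp: A_act L_act)
    also have "(\<Sum>m\<le>l. Poly_Mapping.single (p*m, q*(l-m)) (complex_of_real k * of_nat q * of_nat (l - m) * of_nat (l choose m)))
        = (\<Sum>n<l. Poly_Mapping.single (p*n, q*(l-n)) (complex_of_real k * of_nat q * of_nat (l - n) * of_nat (l choose n)))"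
      by (simp add: lessThan_Suc_atMost[symmetric])
    also have "(\<Sum>m\<le>l. Poly_Mapping.single (p*(m-1), q*(l-m) + q) (complex_of_real k * of_nat (l choose m) * S m))
        = (\<Sum>n<l. Poly_Mapping.single (p*n, q*(l-n)) (complex_of_real k * of_nat (l choose (n+1)) * S (Suc n)))"
    proof -
      have "(\<Sum>m\<le>l. Poly_Mapping.single (p*(m-1), q*(l-m) + q) (complex_of_real k * of_nat (l choose m) * S m))
          = (\<Sum>n<l. Poly_Mapping.single (p*(Suc n-1), q*(l-Suc n) + q) (complex_of_real k * of_nat (l choose Suc n) * S (Suc n)))"
        unfolding lessThan_Suc_atMost[symmetric] sum.lessThan_Suc_shift by (simp add: S_def)
      also have "\<dots> = (\<Sum>n<l. Poly_Mapping.single (p*n, q*(l-n)) (complex_of_real k * of_nat (l choose (n+1)) * S (Suc n)))"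
      proof (rule sum.cong[OF refl])
        fix n assume "n \<in> {..<l}"
        then have "l - n = Suc (l - Suc n)" by simp
        then have "q*(l-Suc n) + q = q*(l-n)" by simp
        then show "Poly_Mapping.single (p*(Suc n-1), q*(l-Suc n) + q) (complex_of_real k * of_nat (l choose Suc n) * S (Suc n)) =
             Poly_Mapping.single (p*n, q*(l-n)) (complex_of_real k * of_nat (l choose (n+1)) * S (Suc n))" by simp
      qed
      finally show ?thesis .
    qed
    also have "(\<Sum>n<l. Poly_Mapping.single (p*n, q*(l-n)) (complex_of_real k * of_nat q * of_nat (l - n) * of_nat (l choose n)))
       + (\<Sum>n<l. Poly_Mapping.single (p*n, q*(l-n)) (complex_of_real k * of_nat (l choose (n+1)) * S (Suc n))) = 0"
    proof -
      have H: "\<And>n. n < l \<Longrightarrow> of_nat q * of_nat (l - n) * of_nat (l choose n) + of_nat (l choose (n+1)) * S (Suc n) = (0::complex)"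
      proof -
        fix n assume n: "n < l"
        have "of_nat (l choose (n+1)) * S (Suc n) = (\<Sum>j\<le>n. F n j * d j)"
          by (simp add: S_def F_def sum_distrib_left lessThan_Suc_atMost algebra_simps)
        also have "\<dots> = v n" using d n by simp
        finally show "of_nat q * of_nat (l - n) * of_nat (l choose n) + of_nat (l choose (n+1)) * S (Suc n) = (0::complex)"
          by (simp add: v_def)
      qed
      have "Poly_Mapping.single (p*n, q*(l-n)) (complex_of_real k * of_nat q * of_nat (l - n) * of_nat (l choose n))
          + Poly_Mapping.single (p*n, q*(l-n)) (complex_of_real k * of_nat (l choose (n+1)) * S (Suc n)) = 0" if n: "n < l" for n
      proof -
        have "complex_of_real k * of_nat q * of_nat (l - n) * of_nat (l choose n) + complex_of_real k * of_nat (l choose (n+1)) * S (Suc n)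
          = complex_of_real k * (of_nat q * of_nat (l - n) * of_nat (l choose n) + of_nat (l choose (n+1)) * S (Suc n))"
          by (simp only: distrib_left mult.assoc)
        also have "\<dots> = 0" using H[OF n] by simp
        finally show ?thesis by (simp only: single_add[symmetric] single_zero)
      qed
      then show ?thesis by (simp add: sum.distrib[symmetric])
    qed
    finally show ?thesis by (simp add: Ann_def)
  qed
  have WL: "wweight (w1, w2) m < 0" if "m \<in> Poly_Mapping.keys L" for m
  proof (cases "k = 0")
    case True
    then have "L = 0" by (simp add: L_def)
    then show ?thesis using that by simp
  next
    case False
    then have lt: "real p * w1 < real q * w2" using le q by (auto simp: k_def field_simps)
    from that obtain j where "m = WM (p*j) q (p*(j+1)) 0"
      using keys_sum[of "\<lambda>j. Poly_Mapping.single (WM (p*j) q (p*(j+1)) 0) (complex_of_real k * d j)" "{..<l}"]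
      unfolding L_def by (auto split: if_splits)
    then show ?thesis using lt by (simp add: algebra_simps)
  qed
  have init: "init_form (w1, w2) (A + L) = A"
    by (rule init_split[where W=0]) (use A_nz[OF nz] keys_wA WL in \<open>auto simp: A_def\<close>)
  have evA: "eval_s (w1, w2) [: - complex_of_real c0, 1 :] = A"
    unfolding A_def by (rule eval_s_lin)
  show ?thesis
    unfolding c0_def[symmetric] is_b_function_def
  proof (intro conjI)
    show "lead_coeff [:- complex_of_real c0, 1:] = 1" by simp
    show "{c. eval_s (w1, w2) c \<in> init_ideal (w1, w2) (Ann (f_pq p q ^ l))} = {c. [:- complex_of_real c0, 1:] dvd c}"
    proof (intro set_eqI iffI; simp)
      fix c assume c: "eval_s (w1, w2) c \<in> init_ideal (w1, w2) (Ann (f_pq p q ^ l))"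
      have lb: "c0 \<le> degr (w1, w2) ij" if "ij \<in> Poly_Mapping.keys (f_pq p q ^ l)" for ij
      proof -
        from keys_fpow[OF that] obtain m where m: "m \<le> l" "ij = (p*m, q*(l-m))" by auto
        have "degr (w1, w2) ij - c0 = real (l - m) * (real q * w2 - real p * w1)"
          using m by (simp add: degr_def c0_def of_nat_diff algebra_simps)
        also have "\<dots> \<ge> 0" using le by simp
        finally show ?thesis by simp
      qed
      have t0: "(p*l, 0) \<in> Poly_Mapping.keys (f_pq p q ^ l)" using lookup_fpow_x[OF p] by (simp add: in_keys_iff)
      have "degr (w1, w2) (p*l, 0) = c0" by (simp add: degr_def c0_def)
      from lower_bound[OF c lb t0 this] show "[:- complex_of_real c0, 1:] dvd c"
        by (simp add: poly_eq_0_iff_dvd)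
    next
      fix c assume "[:- complex_of_real c0, 1:] dvd c"
      then obtain r where r: "c = [:- complex_of_real c0, 1:] * r" by (auto elim: dvdE)
      have "eval_s (w1, w2) c = eval_s (w1, w2) r \<star> init_form (w1, w2) (A + L)"
        unfolding r mult.commute[of "[:- complex_of_real c0, 1:]"] eval_s_mult evA init ..
      also have "\<dots> \<in> init_ideal (w1, w2) (Ann (f_pq p q ^ l))"
        unfolding init_ideal_def by (rule left_ideal_gen.gen) (use Ann in auto)
      finally show "eval_s (w1, w2) c \<in> init_ideal (w1, w2) (Ann (f_pq p q ^ l))" .
    qed
  qed
qed

lemma case2:
  fixes p q l :: nat and w1 w2 :: real
  assumes p: "0 < p" and q: "0 < q" and le: "real q * w2 \<le> real p * w1" and nz: "(w1, w2) \<noteq> (0, 0)"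
  shows "is_b_function (Ann (f_pq p q ^ l)) (w1, w2) [: - complex_of_real (real q * real l * w2), 1 :]"
proof -
  define c0 where "c0 = real q * real l * w2"
  define k where "k = w1 - real q * w2 / real p"
  define F where "F n j = (of_nat (l choose (n+1)) * of_nat (ff (q*(n+1)) (q*(j+1))) :: complex)" for n j
  define v where "v n = - (of_nat p * of_nat (l - n) * of_nat (l choose n) :: complex)" for n
  have "\<And>n. n < l \<Longrightarrow> F n n \<noteq> 0" by (simp add: F_def ff_self_nz)
  then obtain d where d: "\<forall>n<l. (\<Sum>j\<le>n. F n j * d j) = v n" using tri_solve by blast
  define A where "A = Poly_Mapping.single (WM 1 0 1 0) (complex_of_real w1) + Poly_Mapping.single (WM 0 1 0 1) (complex_of_real w2)
        + Poly_Mapping.single (WM 0 0 0 0) (- complex_of_real c0)"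
  define L where "L = (\<Sum>j<l. Poly_Mapping.single (WM p (q*j) 0 (q*(j+1))) (complex_of_real k * d j))"
  define S where "S m = (\<Sum>j<m. d j * of_nat (ff (q*m) (q*(j+1))))" for m
  have L_act: "wact L (Poly_Mapping.single (p*(l-m), q*m) u) =
      Poly_Mapping.single (p*(l-m) + p, q*(m-1)) (complex_of_real k * u * S m)" if m: "m \<le> l" for m u
  proof -
    have "wact L (Poly_Mapping.single (p*(l-m), q*m) u) =
       (\<Sum>j<l. Poly_Mapping.single (p*(l-m) + p, q*(m-1))
            (if j < m then complex_of_real k * u * (d j * of_nat (ff (q*m) (q*(j+1)))) else 0))"
      unfolding L_def wact_sum_left
    proof (rule sum.cong[OF refl])
      fix j assume "j \<in> {..<l}"
      show "wact (Poly_Mapping.single (WM p (q*j) 0 (q*(j+1))) (complex_of_real k * d j)) (Poly_Mapping.single (p*(l-m), q*m) u) =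
        Poly_Mapping.single (p*(l-m) + p, q*(m-1)) (if j < m then complex_of_real k * u * (d j * of_nat (ff (q*m) (q*(j+1)))) else 0)"
      proof (cases "j < m")
        case True
        then have "j+1 \<le> m" by simp
        then have "q*(j+1) \<le> q*m" by (rule mult_le_mono2)
        moreover have "q*(j+1) = q*j + q" by simp
        moreover have "q*(m-1) = q*m - q" by (simp add: diff_mult_distrib2)
        ultimately have pos: "q*m - q*(j+1) + q*j = q*(m-1)" by linarith
        show ?thesis using True
          by (simp only: wact_single_single wmon_act_alt pos) (simp add: algebra_simps)
      next
        case False
        then have "m < j+1" by simp
        then have "q*m < q*(j+1)" using q by (rule mult_less_mono2)
        then have "ff (q*m) (q*(j+1)) = 0" by (simp add: ff_zero_iff)
        then show ?thesis using False by (simp add: wact_single_single wmon_act_alt)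
      qed
    qed
    also have "\<dots> = Poly_Mapping.single (p*(l-m) + p, q*(m-1)) (complex_of_real k * u * S m)"
      by (simp add: sum_single sum_lt_filter[OF m] S_def sum_distrib_left)
    finally show ?thesis .
  qed
  have A_act: "wact A (Poly_Mapping.single (p*(l-m), q*m) u) =
      Poly_Mapping.single (p*(l-m), q*m) (complex_of_real k * of_nat p * of_nat (l - m) * u)" if m: "m \<le> l" for m u
  proof -
    have "w1 * real (p*(l-m)) + w2 * real (q*m) - c0 = k * real p * real (l - m)"
      using m p by (simp add: c0_def k_def of_nat_diff field_simps)
    then have "complex_of_real w1 * of_nat (p*(l-m)) + complex_of_real w2 * of_nat (q*m) - complex_of_real c0
          = complex_of_real k * of_nat p * of_nat (l - m)"
      by (metis (mono_tags, lifting) of_real_diff of_real_add of_real_mult of_real_of_nat_eq)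
    then show ?thesis unfolding A_def wact_A by simp
  qed
  have Ann: "A + L \<in> Ann (f_pq p q ^ l)"
  proof -
    have "wact (A + L) (f_pq p q ^ l) =
       (\<Sum>m\<le>l. Poly_Mapping.single (p*(l-m), q*m) (complex_of_real k * of_nat p * of_nat (l - m) * of_nat (l choose m)))
     + (\<Sum>m\<le>l. Poly_Mapping.single (p*(l-m) + p, q*(m-1)) (complex_of_real k * of_nat (l choose m) * S m))"
      unfolding fpow2 wact_sum_right wact_add_left sum.distrib
      by (intro arg_cong2[where f="(+)"] sum.cong) (auto simp: A_act L_act)
    also have "(\<Sum>m\<le>l. Poly_Mapping.single (p*(l-m), q*m) (complex_of_real k * of_nat p * of_nat (l - m) * of_nat (l choose m)))
        = (\<Sum>n<l. Poly_Mapping.single (p*(l-n), q*n) (complex_of_real k * of_nat p * of_nat (l - n) * of_nat (l choose n)))"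
      by (simp add: lessThan_Suc_atMost[symmetric])
    also have "(\<Sum>m\<le>l. Poly_Mapping.single (p*(l-m) + p, q*(m-1)) (complex_of_real k * of_nat (l choose m) * S m))
        = (\<Sum>n<l. Poly_Mapping.single (p*(l-n), q*n) (complex_of_real k * of_nat (l choose (n+1)) * S (Suc n)))"
    proof -
      have "(\<Sum>m\<le>l. Poly_Mapping.single (p*(l-m) + p, q*(m-1)) (complex_of_real k * of_nat (l choose m) * S m))
          = (\<Sum>n<l. Poly_Mapping.single (p*(l-Suc n) + p, q*(Suc n-1)) (complex_of_real k * of_nat (l choose Suc n) * S (Suc n)))"
        unfolding lessThan_Suc_atMost[symmetric] sum.lessThan_Suc_shift by (simp add: S_def)
      also have "\<dots> = (\<Sum>n<l. Poly_Mapping.single (p*(l-n), q*n) (complex_of_real k * of_nat (l choose (n+1)) * S (Suc n)))"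
      proof (rule sum.cong[OF refl])
        fix n assume "n \<in> {..<l}"
        then have "l - n = Suc (l - Suc n)" by simp
        then have "p*(l-Suc n) + p = p*(l-n)" by simp
        then show "Poly_Mapping.single (p*(l-Suc n) + p, q*(Suc n-1)) (complex_of_real k * of_nat (l choose Suc n) * S (Suc n)) =
             Poly_Mapping.single (p*(l-n), q*n) (complex_of_real k * of_nat (l choose (n+1)) * S (Suc n))" by simp
      qed
      finally show ?thesis .
    qed
    also have "(\<Sum>n<l. Poly_Mapping.single (p*(l-n), q*n) (complex_of_real k * of_nat p * of_nat (l - n) * of_nat (l choose n)))
       + (\<Sum>n<l. Poly_Mapping.single (p*(l-n), q*n) (complex_of_real k * of_nat (l choose (n+1)) * S (Suc n))) = 0"
    proof -
      have H: "\<And>n. n < l \<Longrightarrow> of_nat p * of_nat (l - n) * of_nat (l choose n) + of_nat (l choose (n+1)) * S (Suc n) = (0::complex)"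
      proof -
        fix n assume n: "n < l"
        have "of_nat (l choose (n+1)) * S (Suc n) = (\<Sum>j\<le>n. F n j * d j)"
          by (simp add: S_def F_def sum_distrib_left lessThan_Suc_atMost algebra_simps)
        also have "\<dots> = v n" using d n by simp
        finally show "of_nat p * of_nat (l - n) * of_nat (l choose n) + of_nat (l choose (n+1)) * S (Suc n) = (0::complex)"
          by (simp add: v_def)
      qed
      have "Poly_Mapping.single (p*(l-n), q*n) (complex_of_real k * of_nat p * of_nat (l - n) * of_nat (l choose n))
          + Poly_Mapping.single (p*(l-n), q*n) (complex_of_real k * of_nat (l choose (n+1)) * S (Suc n)) = 0" if n: "n < l" for n
      proof -
        have "complex_of_real k * of_nat p * of_nat (l - n) * of_nat (l choose n) + complex_of_real k * of_nat (l choose (n+1)) * S (Suc n)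
          = complex_of_real k * (of_nat p * of_nat (l - n) * of_nat (l choose n) + of_nat (l choose (n+1)) * S (Suc n))"
          by (simp only: distrib_left mult.assoc)
        also have "\<dots> = 0" using H[OF n] by simp
        finally show ?thesis by (simp only: single_add[symmetric] single_zero)
      qed
      then show ?thesis by (simp add: sum.distrib[symmetric])
    qed
    finally show ?thesis by (simp add: Ann_def)
  qed
  have WL: "wweight (w1, w2) m < 0" if "m \<in> Poly_Mapping.keys L" for m
  proof (cases "k = 0")
    case True
    then have "L = 0" by (simp add: L_def)
    then show ?thesis using that by simp
  next
    case False
    then have lt: "real q * w2 < real p * w1" using le p by (auto simp: k_def field_simps)
    from that obtain j where "m = WM p (q*j) 0 (q*(j+1))"
      using keys_sum[of "\<lambda>j. Poly_Mapping.single (WM p (q*j) 0 (q*(j+1))) (complex_of_real k * d j)" "{..<l}"]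
      unfolding L_def by (auto split: if_splits)
    then show ?thesis using lt by (simp add: algebra_simps)
  qed
  have init: "init_form (w1, w2) (A + L) = A"
    by (rule init_split[where W=0]) (use A_nz[OF nz] keys_wA WL in \<open>auto simp: A_def\<close>)
  have evA: "eval_s (w1, w2) [: - complex_of_real c0, 1 :] = A"
    unfolding A_def by (rule eval_s_lin)
  show ?thesis
    unfolding c0_def[symmetric] is_b_function_def
  proof (intro conjI)
    show "lead_coeff [:- complex_of_real c0, 1:] = 1" by simp
    show "{c. eval_s (w1, w2) c \<in> init_ideal (w1, w2) (Ann (f_pq p q ^ l))} = {c. [:- complex_of_real c0, 1:] dvd c}"
    proof (intro set_eqI iffI; simp)
      fix c assume c: "eval_s (w1, w2) c \<in> init_ideal (w1, w2) (Ann (f_pq p q ^ l))"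
      have lb: "c0 \<le> degr (w1, w2) ij" if "ij \<in> Poly_Mapping.keys (f_pq p q ^ l)" for ij
      proof -
        from keys_fpow[OF that] obtain m where m: "m \<le> l" "ij = (p*m, q*(l-m))" by auto
        have "degr (w1, w2) ij - c0 = real m * (real p * w1 - real q * w2)"
          using m by (simp add: degr_def c0_def of_nat_diff algebra_simps)
        also have "\<dots> \<ge> 0" using le by simp
        finally show ?thesis by simp
      qed
      have t0: "(0, q*l) \<in> Poly_Mapping.keys (f_pq p q ^ l)" using lookup_fpow_y[OF q] by (simp add: in_keys_iff)
      have "degr (w1, w2) (0, q*l) = c0" by (simp add: degr_def c0_def)
      from lower_bound[OF c lb t0 this] show "[:- complex_of_real c0, 1:] dvd c"
        by (simp add: poly_eq_0_iff_dvd)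
    next
      fix c assume "[:- complex_of_real c0, 1:] dvd c"
      then obtain r where r: "c = [:- complex_of_real c0, 1:] * r" by (auto elim: dvdE)
      have "eval_s (w1, w2) c = eval_s (w1, w2) r \<star> init_form (w1, w2) (A + L)"
        unfolding r mult.commute[of "[:- complex_of_real c0, 1:]"] eval_s_mult evA init ..
      also have "\<dots> \<in> init_ideal (w1, w2) (Ann (f_pq p q ^ l))"
        unfolding init_ideal_def by (rule left_ideal_gen.gen) (use Ann in auto)
      finally show "eval_s (w1, w2) c \<in> init_ideal (w1, w2) (Ann (f_pq p q ^ l))" .
    qed
  qed
qed



theorem mainTheorem15:
  fixes p q l :: nat and \<omega>1 \<omega>2 :: real
  assumes "0 < p" and "p \<le> q" and "(\<omega>1, \<omega>2) \<noteq> (0, 0)"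
  shows "is_b_function (Ann (f_pq p q ^ l)) (\<omega>1, \<omega>2)
           (if real p * \<omega>1 \<le> real q * \<omega>2
            then [: - complex_of_real (real p * real l * \<omega>1), 1 :]
            else [: - complex_of_real (real q * real l * \<omega>2), 1 :])"
proof -
  have q: "0 < q" using assms(1,2) by simp
  show ?thesis
  proof (cases "real p * \<omega>1 \<le> real q * \<omega>2")
    case True
    then show ?thesis using case1[OF assms(1) q True assms(3)] by simp
  next
    case False
    then have le: "real q * \<omega>2 \<le> real p * \<omega>1" by simp
    show ?thesis using case2[OF assms(1) q le assms(3)] False by simp
  qed
qed

end
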